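(* Let $F$ be a positive integer and $S\in\mathrm{Sat}(F)$. Then $S$ has a unique minimal $\mathrm{Sat}(F)$-system of generators, namely $$\{x\in S\setminus\{0\}\mid x<F\text{ and }\mathrm{d}_S(x)\neq\mathrm{d}_S(y)\text{ for all }y\in S\setminus\{0\}\text{ with }y<x\}.$$
   Context: A numerical semigroup is a subset $S\subseteq\mathbb{N}$ closed under addition, containing $0$, with $\mathbb{N}\setminus S$ finite; its Frobenius number $\mathrm{F}(S)$ is the largest integer not in $S$. For $A\subseteq\mathbb{N}$ and $a\in A$, let $\mathrm{d}_A(a)=\gcd\{x\in A\mid x\le a\}$. A numerical semigroup $S$ is saturated if $s+\mathrm{d}_S(s)\in S$ for all $s\in S\setminus\{0\}$. For a positive integer $F$, $\mathrm{Sat}(F)$ denotes the set of all saturated numerical semigroups $S$ with $\mathrm{F}(S)=F$. Let $\Delta(F+1)=\{0\}\cup\{x\in\mathbb{N}\mid x\ge F+1\}$. A set $X\subseteq\mathbb{N}$ is a $\mathrm{Sat}(F)$-set if $X\cap\Delta(F+1)=\emptyset$ and there exists $S\in\mathrm{Sat}(F)$ with $X\subseteq S$. For a $\mathrm{Sat}(F)$-set $X$, $\mathrm{Sat}(F)[X]$ denotes the intersection of all elements of $\mathrm{Sat}(F)$ containing $X$ (the smallest element of $\mathrm{Sat}(F)$ containing $X$). If $S=\mathrm{Sat}(F)[X]$, $X$ is a $\mathrm{Sat}(F)$-system of generators of $S$; it is minimal if $S\neq\mathrm{Sat}(F)[Y]$ for every proper subset $Y\subsetneq X$. *)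

theory Defs
  imports Main
begin

definition numerical_semigroup :: "nat set \<Rightarrow> bool" where
  "numerical_semigroup S \<longleftrightarrow> 0 \<in> S \<and> (\<forall>x\<in>S. \<forall>y\<in>S. x + y \<in> S) \<and> finite (UNIV - S)"

definition frobenius :: "nat set \<Rightarrow> nat" where
  "frobenius S = Max (UNIV - S)"

definition dgcd :: "nat set \<Rightarrow> nat \<Rightarrow> nat" where
  "dgcd A a = Gcd {x \<in> A. x \<le> a}"

definition saturated :: "nat set \<Rightarrow> bool" where
  "saturated S \<longleftrightarrow> numerical_semigroup S \<and> (\<forall>s\<in>S - {0}. s + dgcd S s \<in> S)"

definition Sat :: "nat \<Rightarrow> nat set set" where
  "Sat F = {S. saturated S \<and> UNIV - S \<noteq> {} \<and> frobenius S = F}"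

definition Delta :: "nat \<Rightarrow> nat set" where
  "Delta m = {0} \<union> {x. x \<ge> m}"

definition Sat_set :: "nat \<Rightarrow> nat set \<Rightarrow> bool" where
  "Sat_set F X \<longleftrightarrow> X \<inter> Delta (F + 1) = {} \<and> (\<exists>S\<in>Sat F. X \<subseteq> S)"

definition Sat_closure :: "nat \<Rightarrow> nat set \<Rightarrow> nat set" where
  "Sat_closure F X = \<Inter> {S \<in> Sat F. X \<subseteq> S}"

definition Sat_system :: "nat \<Rightarrow> nat set \<Rightarrow> nat set \<Rightarrow> bool" where
  "Sat_system F X S \<longleftrightarrow> Sat_set F X \<and> S = Sat_closure F X"

definition minimal_Sat_system :: "nat \<Rightarrow> nat set \<Rightarrow> nat set \<Rightarrow> bool" where
  "minimal_Sat_system F X S \<longleftrightarrow> Sat_system F X S \<and>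
     (\<forall>Y. Y \<subset> X \<longrightarrow> S \<noteq> Sat_closure F Y)"

end

theory Submission
  imports Defs
begin

lemma Gcd_sub_dvd: "A \<subseteq> B \<Longrightarrow> Gcd B dvd Gcd (A::nat set)"
  by (rule Gcd_greatest) (auto intro: Gcd_dvd)

lemma dgcd_dvd: "u \<in> A \<Longrightarrow> u \<le> a \<Longrightarrow> dgcd A a dvd u"
  unfolding dgcd_def by (rule Gcd_dvd) auto

lemma dgcd_pos: "t \<in> A \<Longrightarrow> t > 0 \<Longrightarrow> dgcd A t > 0"
  unfolding dgcd_def by (metis (mono_tags, lifting) Gcd_0_iff bot_nat_0.not_eq_extremum mem_Collect_eq order_refl singletonD subsetD)

lemma dgcd_mono: "b \<le> a \<Longrightarrow> dgcd A a dvd dgcd A b"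
  unfolding dgcd_def by (rule Gcd_sub_dvd) auto

lemma sat_mult:
  assumes "saturated S"
  shows "t \<in> S \<Longrightarrow> t > 0 \<Longrightarrow> dgcd S t dvd n \<Longrightarrow> t + n \<in> S"
proof (induction n arbitrary: t rule: less_induct)
  case (less n)
  show ?case
  proof (cases "n = 0")
    case True then show ?thesis using less by simp
  next
    case False
    define d where "d = dgcd S t"
    have dpos: "d > 0" using dgcd_pos less d_def by auto
    have t': "t + d \<in> S" using assms less unfolding saturated_def d_def by auto
    have "dgcd S (t + d) dvd d" unfolding d_def by (rule dgcd_mono) simp
    moreover have "d dvd n - d" using less d_def by simp
    ultimately have "dgcd S (t+d) dvd n - d" by (rule dvd_trans)
    moreover have "d \<le> n" using less False d_def by (simp add: dvd_imp_le)
    ultimately have "t + d + (n - d) \<in> S"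
      using less.IH[of "n - d" "t + d"] t' dpos False by auto
    then show ?thesis using \<open>d \<le> n\<close> by simp
  qed
qed

lemma Sat_facts:
  assumes "S \<in> Sat F"
  shows "saturated S" "F \<notin> S" "\<And>y. y > F \<Longrightarrow> y \<in> S" "0 \<in> S"
    "finite (UNIV - S)"
proof -
  have s: "saturated S" and ne: "UNIV - S \<noteq> {}" and fr: "Max (UNIV - S) = F"
    using assms unfolding Sat_def frobenius_def by auto
  have fin: "finite (UNIV - S)" using s unfolding saturated_def numerical_semigroup_def by auto
  show "saturated S" by (rule s)
  show "finite (UNIV - S)" by (rule fin)
  show "F \<notin> S" using Max_in[OF fin ne] fr by auto
  show "\<And>y. y > F \<Longrightarrow> y \<in> S" using Max_ge[OF fin] fr by fastforce
  show "0 \<in> S" using s unfolding saturated_def numerical_semigroup_def by auto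
qed

locale setup41 =
  fixes F :: nat and S :: "nat set"
  assumes Fpos: "F > 0" and SS: "S \<in> Sat F"
begin

definition G where "G = {x \<in> S - {0}. x < F \<and> (\<forall>y\<in>S - {0}. y < x \<longrightarrow> dgcd S x \<noteq> dgcd S y)}"

lemma gen:
  assumes T: "T \<in> Sat F" and GT: "G \<subseteq> T"
  shows "S \<subseteq> T"
proof -
  have sT: "saturated T" using Sat_facts[OF T] by auto
  have "\<forall>s. s \<in> S \<longrightarrow> s \<in> T"
  proof (rule allI, induct_tac s rule: less_induct, rule impI)
    fix s assume IH: "\<And>y. y < s \<Longrightarrow> y \<in> S \<longrightarrow> y \<in> T" and sS: "s \<in> S"
    show "s \<in> T"
    proof -
      consider "s = 0" | "s > F" | "s = F" | "0 < s \<and> s < F" by linarith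
      then show ?thesis
      proof cases
        case 1 then show ?thesis using Sat_facts[OF T] by simp
      next
        case 2 then show ?thesis using Sat_facts[OF T] by simp
      next
        case 3 then show ?thesis using Sat_facts[OF SS] sS by simp
      next
        case 4
        define P where "P = (\<lambda>g. g \<in> S \<and> g > 0 \<and> dgcd S g = dgcd S s)"
        define g where "g = (LEAST g. P g)"
        have Ps: "P s" using 4 sS P_def by simp
        have Pg: "P g" using LeastI[of P s, OF Ps] g_def by simp
        have gs: "g \<le> s" using Least_le[of P s, OF Ps] g_def by simp
        have "g \<in> G"
        proof -
          have "\<forall>y\<in>S - {0}. y < g \<longrightarrow> dgcd S g \<noteq> dgcd S y"
          proof (intro ballI impI)
            fix y assume y: "y \<in> S - {0}" "y < g"
            show "dgcd S g \<noteq> dgcd S y"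
            proof
              assume "dgcd S g = dgcd S y"
              then have "P y" using y Pg P_def by auto
              then have "g \<le> y" using Least_le[of P y] g_def by simp
              then show False using y by simp
            qed
          qed
          then show ?thesis using Pg gs 4 unfolding G_def P_def by auto
        qed
        then have gT: "g \<in> T" using GT by auto
        show ?thesis
        proof (cases "g = s")
          case True then show ?thesis using gT by simp
        next
          case False
          then have lt: "g < s" using gs by simp
          have "{x\<in>S. x \<le> g} \<subseteq> {x\<in>T. x \<le> g}" using IH lt by auto
          then have "dgcd T g dvd dgcd S g" unfolding dgcd_def by (rule Gcd_sub_dvd)
          moreover have "dgcd S g = dgcd S s" using Pg P_def by simp
          moreover have "dgcd S s dvd s - g"
            using dgcd_dvd[of s S s] dgcd_dvd[of g S s] sS Pg gs P_def
            by (simp add: dvd_diff_nat)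
          ultimately have "dgcd T g dvd s - g" by (metis dvd_trans)
          then have "g + (s - g) \<in> T" using sat_mult[OF sT gT] Pg P_def by simp
          then show ?thesis using lt by simp
        qed
      qed
    qed
  qed
  then show ?thesis by auto
qed

lemma remove:
  assumes xG: "x \<in> G"
  shows "S - {x} \<in> Sat F"
proof -
  have sS: "saturated S" using Sat_facts[OF SS] by auto
  have xS: "x \<in> S" and x0: "x > 0" and xF: "x < F"
    and xd: "\<And>y. y \<in> S - {0} \<Longrightarrow> y < x \<Longrightarrow> dgcd S x \<noteq> dgcd S y"
    using xG unfolding G_def by auto
  define p where "p = Max {u \<in> S. u < x}"
  have finb: "finite {u \<in> S. u < x}" by simp
  have neb: "{u \<in> S. u < x} \<noteq> {}" using x0 Sat_facts[OF SS] by auto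
  have pin: "p \<in> S" "p < x" using Max_in[OF finb neb] p_def by auto
  have ple: "\<And>u. u \<in> S \<Longrightarrow> u < x \<Longrightarrow> u \<le> p" using Max_ge[OF finb] p_def by auto
  have pdvd: "\<And>u. u \<in> S \<Longrightarrow> u < x \<Longrightarrow> dgcd S p dvd u"
    using ple dgcd_dvd by blast
  have K: "p > 0 \<Longrightarrow> \<not> dgcd S p dvd x"
  proof
    assume p0: "p > 0" and dx: "dgcd S p dvd x"
    have "dgcd S p dvd Gcd {x' \<in> S. x' \<le> x}"
    proof (rule Gcd_greatest)
      fix u assume "u \<in> {x' \<in> S. x' \<le> x}"
      then show "dgcd S p dvd u" using pdvd dx
        by (cases "u = x") auto
    qed
    then have "dgcd S p dvd dgcd S x" by (simp add: dgcd_def)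
    moreover have "dgcd S x dvd dgcd S p" using pin by (simp add: dgcd_mono)
    ultimately have "dgcd S x = dgcd S p" by (simp add: dvd_antisym)
    then show False using xd[of p] pin p0 by auto
  qed
  let ?T = "S - {x}"
  have ns: "numerical_semigroup ?T"
    unfolding numerical_semigroup_def
  proof (intro conjI ballI)
    show "0 \<in> ?T" using x0 Sat_facts[OF SS] by auto
    have "UNIV - ?T = insert x (UNIV - S)" using xS by auto
    then show "finite (UNIV - ?T)" using Sat_facts[OF SS] by simp
  next
    fix y z assume y: "y \<in> ?T" and z: "z \<in> ?T"
    have "y + z \<in> S" using y z sS unfolding saturated_def numerical_semigroup_def by auto
    moreover have "y + z \<noteq> x"
    proof
      assume e: "y + z = x"
      then have "y > 0" "z > 0" "y < x" "z < x" using y z by auto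
      then have "p > 0" using ple y by fastforce
      moreover have "dgcd S p dvd x" using e pdvd \<open>y < x\<close> \<open>z < x\<close> y z by auto
      ultimately show False using K by simp
    qed
    ultimately show "y + z \<in> ?T" by simp
  qed
  have sat: "saturated ?T"
    unfolding saturated_def
  proof (intro conjI ballI ns)
    fix s assume s: "s \<in> ?T - {0}"
    have "dgcd S s dvd dgcd ?T s" unfolding dgcd_def by (rule Gcd_sub_dvd) auto
    then have inS: "s + dgcd ?T s \<in> S" using sat_mult[OF sS, of s] s by auto
    have "s + dgcd ?T s \<noteq> x"
    proof
      assume e: "s + dgcd ?T s = x"
      then have sx: "s < x" using s dgcd_pos[of s ?T] by auto
      have "{u \<in> ?T. u \<le> s} = {u \<in> S. u \<le> s}" using sx by auto
      then have eq: "dgcd ?T s = dgcd S s" unfolding dgcd_def by simp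
      have "p > 0" using ple s sx by fastforce
      moreover have "dgcd S p dvd s" using pdvd s sx by auto
      moreover have "dgcd S p dvd dgcd S s" using ple s sx by (simp add: dgcd_mono)
      ultimately show False using K e eq by (metis dvd_add)
    qed
    then show "s + dgcd ?T s \<in> ?T" using inS by simp
  qed
  have fin: "finite (UNIV - S)" using Sat_facts[OF SS] by auto
  have FU: "F \<in> UNIV - S" using Sat_facts[OF SS] by auto
  have fr: "Max (UNIV - S) = F" using SS unfolding Sat_def frobenius_def by auto
  have eqc: "UNIV - ?T = insert x (UNIV - S)" using xS by auto
  have "Max (UNIV - ?T) = F"
  proof -
    have ne: "UNIV - S \<noteq> {}" using FU by auto
    have "Max (insert x (UNIV - S)) = max x (Max (UNIV - S))" by (rule Max_insert[OF fin ne])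
    then show ?thesis unfolding eqc using fr xF by simp
  qed
  then show ?thesis using sat FU unfolding Sat_def frobenius_def by auto
qed

lemma closure_sub: "Sat_set F X \<Longrightarrow> X \<subseteq> Sat_closure F X"
  unfolding Sat_set_def Sat_closure_def by auto

lemma key:
  assumes YS: "Y \<subseteq> S" and cl: "Sat_closure F Y = S"
  shows "G \<subseteq> Y"
proof
  fix x assume xG: "x \<in> G"
  show "x \<in> Y"
  proof (rule ccontr)
    assume "x \<notin> Y"
    then have "Y \<subseteq> S - {x}" using YS by auto
    then have "Sat_closure F Y \<subseteq> S - {x}"
      using remove[OF xG] unfolding Sat_closure_def by auto
    moreover have "x \<in> S" using xG unfolding G_def by auto
    ultimately show False using cl by auto
  qed
qed

lemma Gclosure: "Sat_closure F G = S"
proof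
  show "Sat_closure F G \<subseteq> S" using SS unfolding Sat_closure_def G_def by blast
  show "S \<subseteq> Sat_closure F G" unfolding Sat_closure_def using gen by auto
qed

lemma main: "{X. minimal_Sat_system F X S} = {G}"
proof -
  have GS: "G \<subseteq> S" unfolding G_def by (rule subsetI) simp
  have "\<And>x. x \<in> G \<Longrightarrow> x \<noteq> 0 \<and> x < F" unfolding G_def by simp
  then have "G \<inter> Delta (F + 1) = {}" unfolding Delta_def by fastforce
  then have Gset: "Sat_set F G"
    unfolding Sat_set_def using SS GS by blast
  have Gmin: "minimal_Sat_system F G S"
    unfolding minimal_Sat_system_def Sat_system_def
  proof (intro conjI allI impI Gset)
    show "S = Sat_closure F G" using Gclosure by simp
  next
    fix Y assume "Y \<subset> G"
    show "S \<noteq> Sat_closure F Y"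
    proof
      assume "S = Sat_closure F Y"
      moreover have "Y \<subseteq> S" using \<open>Y \<subset> G\<close> GS by blast
      ultimately have "G \<subseteq> Y" using key by simp
      then show False using \<open>Y \<subset> G\<close> by blast
    qed
  qed
  have "X = G" if m: "minimal_Sat_system F X S" for X
  proof -
    have sX: "Sat_set F X" and cX: "S = Sat_closure F X"
      and mX: "\<And>Y. Y \<subset> X \<Longrightarrow> S \<noteq> Sat_closure F Y"
      using m unfolding minimal_Sat_system_def Sat_system_def by blast+
    have "X \<subseteq> S" using closure_sub[OF sX] cX by simp
    then have "G \<subseteq> X" using key[OF _ cX[symmetric]] by simp
    show ?thesis
    proof (rule ccontr)
      assume "X \<noteq> G"
      then have "G \<subset> X" using \<open>G \<subseteq> X\<close> by blast
      then have "S \<noteq> Sat_closure F G" by (rule mX)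
      then show False using Gclosure by simp
    qed
  qed
  then show ?thesis using Gmin by blast
qed

end

theorem proposition41:
  fixes F :: nat and S :: "nat set"
  assumes "F > 0" and "S \<in> Sat F"
  shows "{X. minimal_Sat_system F X S} =
    {{x \<in> S - {0}. x < F \<and> (\<forall>y\<in>S - {0}. y < x \<longrightarrow> dgcd S x \<noteq> dgcd S y)}}"
proof -
  interpret setup41 F S using assms by unfold_locales
  show ?thesis using main unfolding G_def .
qed

end
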